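(* Let $H$ be a real Hilbert space with inner product $(\cdot,\cdot)_H$ and norm $\|\cdot\|$. Let $\mathcal{L}$ be a symmetric positive definite linear operator on $H$ and $f:H\to\mathbb{R}$ Fréchet differentiable with $\nabla f$ Lipschitz continuous with constant $L$. For each $\Phi\in H$ let $\mathbf{L}(\Phi)=\mathbf{M}(\Phi)+\mathbf{S}(\Phi)$ with $\mathbf{S}(\Phi)$ skew-symmetric and $-\mathbf{M}(\Phi)$ symmetric positive definite, and assume there are constants $\alpha_{\mathbf{M}},\beta_{\mathbf{S}}>0$ such that for all $\Phi,\Psi_1,\Psi_2,\Psi\in H$: $(\mathbf{S}(\Phi)\Psi_1,\Psi_2)_H\le\beta_{\mathbf{S}}\|\Psi_1\|\|\Psi_2\|$ and $(-\mathbf{M}(\Phi)\Psi,\Psi)_H\ge\alpha_{\mathbf{M}}\|\Psi\|^2$. Let $\tau>0$, $A>0$, let $\Phi^{n-1},\Phi^n,\hat\Phi^{n+1}\in H$ be given, and suppose $\Phi^{n+1}$ satisfies the SGE-SBDF2 scheme $$\frac{3\Phi^{n+1}-4\Phi^n+\Phi^{n-1}}{2\tau}=\mathbf{L}(\hat\Phi^{n+1})\mu^{n+1},\quad \mu^{n+1}=\mathcal{L}\Phi^{n+1}-\tau A\,\mathbf{M}(\hat\Phi^{n+1})(3\Phi^{n+1}-4\Phi^n+\Phi^{n-1})+2\nabla f(\Phi^n)-\nabla f(\Phi^{n-1}).$$ Let $c=\big(1+\frac{\beta_{\mathbf{S}}}{\alpha_{\mathbf{M}}}\big)^{-1}$ and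 define $$\tilde E_{BDF2}(\Phi^{k+1},\Phi^k)=\tfrac14\|\mathcal{L}^{1/2}\Phi^{k+1}\|^2+\tfrac14\|\mathcal{L}^{1/2}(2\Phi^{k+1}-\Phi^k)\|^2+\tfrac32f(\Phi^{k+1})-\tfrac12f(\Phi^k)+\big(\tfrac{3L}{2}+\sqrt{2A}\,c\big)\|\Phi^{k+1}-\Phi^k\|^2.$$ Then, provided $A\ge\frac{9L^2}{8}\big(1+\frac{\beta_{\mathbf{S}}}{\alpha_{\mathbf{M}}}\big)^2$ (so that all coefficients on the right below are nonpositive), $$\tilde E_{BDF2}(\Phi^{n+1},\Phi^n)-\tilde E_{BDF2}(\Phi^n,\Phi^{n-1})\le-\big(2\sqrt{2A}\,c-3L\big)\|\Phi^{n+1}-\Phi^n\|^2-\tfrac32\sqrt{2A}\,c\,\|d_{tt}\Phi^n\|^2-\tfrac14\|\mathcal{L}^{1/2}d_{tt}\Phi^n\|^2,$$ where $d_{tt}\Phi^n=\Phi^{n+1}-2\Phi^n+\Phi^{n-1}$.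
   Context: $\|\mathcal{L}^{1/2}\Phi\|^2=(\Phi,\mathcal{L}\Phi)_H$. Skew-symmetric: $(\mathbf{S}\Phi,\Psi)_H=-(\Phi,\mathbf{S}\Psi)_H$. *)

theory Defs
  imports "HOL-Analysis.Analysis"
begin

text \<open>Squared norm of the square root of a symmetric positive definite operator,
  via the identity  norm (Lop^(1/2) x)^2 = inner x (Lop x).\<close>
definition sqrt_op_norm_sq :: "('a::real_inner \<Rightarrow> 'a) \<Rightarrow> 'a \<Rightarrow> real" where
  "sqrt_op_norm_sq Lop x = inner x (Lop x)"

definition sym_pos_def_op :: "('a::real_inner \<Rightarrow> 'a) \<Rightarrow> bool" where
  "sym_pos_def_op T \<longleftrightarrow> linear T \<and> (\<forall>x y. inner (T x) y = inner x (T y))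
      \<and> (\<forall>x. x \<noteq> 0 \<longrightarrow> inner (T x) x > 0)"

definition skew_sym_op :: "('a::real_inner \<Rightarrow> 'a) \<Rightarrow> bool" where
  "skew_sym_op T \<longleftrightarrow> linear T \<and> (\<forall>x y. inner (T x) y = - inner x (T y))"

definition E_BDF2 :: "('a::real_inner \<Rightarrow> 'a) \<Rightarrow> ('a \<Rightarrow> real) \<Rightarrow> real \<Rightarrow> real \<Rightarrow> real
    \<Rightarrow> 'a \<Rightarrow> 'a \<Rightarrow> real" where
  "E_BDF2 Lop f Lc A c P1 P0 =
     1/4 * sqrt_op_norm_sq Lop P1 + 1/4 * sqrt_op_norm_sq Lop (2 *\<^sub>R P1 - P0)
     + 3/2 * f P1 - 1/2 * f P0
     + (3 * Lc / 2 + sqrt (2 * A) * c) * (norm (P1 - P0))\<^sup>2"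

end

theory Submission
  imports Defs "HOL-Analysis.Analysis"
begin

lemma descent:
  fixes f :: "'a::real_inner \<Rightarrow> real" and g :: "'a \<Rightarrow> 'a"
  assumes fderiv: "\<And>x. (f has_derivative (\<lambda>h. inner (g x) h)) (at x)"
    and lip: "L-lipschitz_on UNIV g"
  shows "f y - f x \<le> inner (g x) (y - x) + L/2 * (norm (y - x))\<^sup>2"
proof -
  define h where "h = y - x"
  define \<phi> where "\<phi> t = f (x + t *\<^sub>R h) - t * inner (g x) h - L/2 * t^2 * (norm h)\<^sup>2" for t
  have d: "(\<phi> has_real_derivative (inner (g (x + t *\<^sub>R h)) h - inner (g x) h - L * t * (norm h)\<^sup>2)) (at t)" for t
  proof -
    have c1: "((\<lambda>t. x + t *\<^sub>R h) has_derivative (\<lambda>u. u *\<^sub>R h)) (at t)"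
      by (auto intro!: derivative_eq_intros)
    have c2: "((\<lambda>t. f (x + t *\<^sub>R h)) has_derivative (\<lambda>u. inner (g (x + t *\<^sub>R h)) (u *\<^sub>R h))) (at t)"
      using has_derivative_compose[OF c1 fderiv] by simp
    have c3: "((\<lambda>t. f (x + t *\<^sub>R h)) has_real_derivative inner (g (x + t *\<^sub>R h)) h) (at t)"
      by (rule has_derivative_imp_has_field_derivative[OF c2]) (simp add: algebra_simps)
    show ?thesis unfolding \<phi>_def
      by (auto intro!: derivative_eq_intros c3)
  qed
  have nonpos: "inner (g (x + t *\<^sub>R h)) h - inner (g x) h - L * t * (norm h)\<^sup>2 \<le> 0" if "0 \<le> t" for t
  proof -
    have "inner (g (x + t *\<^sub>R h)) h - inner (g x) h = inner (g (x + t *\<^sub>R h) - g x) h"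
      by (simp add: inner_diff_left)
    also have "\<dots> \<le> norm (g (x + t *\<^sub>R h) - g x) * norm h" by (rule norm_cauchy_schwarz)
    also have "\<dots> \<le> (L * norm (t *\<^sub>R h)) * norm h"
      using lipschitz_on_normD[OF lip, of "x + t *\<^sub>R h" x] by (simp add: mult_right_mono)
    also have "\<dots> = L * t * (norm h)\<^sup>2" using that by (simp add: power2_eq_square)
    finally show ?thesis by simp
  qed
  have "\<phi> 1 \<le> \<phi> 0"
  proof (rule DERIV_nonpos_imp_nonincreasing[of 0 1 \<phi>])
    fix t :: real assume "0 \<le> t" "t \<le> 1"
    then show "\<exists>y. (\<phi> has_real_derivative y) (at t) \<and> y \<le> 0"
      using d[of t] nonpos[of t] by blast
  qed simp
  then show ?thesis unfolding \<phi>_def h_def by (simp add: algebra_simps)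
qed
lemma final_arith:
  fixes EL iDLa q \<tau> X A Y iG G1 G2 C fa fb fm L x y nD s ip dt2 K :: real
  assumes EL: "EL = 1/2 * iDLa - 1/4 * q"
    and iD: "iDLa = - 2 * \<tau> * X - \<tau> * A * Y - iG"
    and iG: "iG = 3 * G1 + G2 + C"
    and d1: "fa - fb \<le> G1 + L/2 * x\<^sup>2"
    and d2: "fm - fb \<le> G2 + L/2 * y\<^sup>2"
    and cC: "- C \<le> nD * (L * y)"
    and nD: "nD \<le> 3 * x + y" and L0: "0 \<le> L" and y0: "0 \<le> y" and x0: "0 \<le> x"
    and Tb: "s / 2 * nD\<^sup>2 \<le> \<tau> * X + \<tau> * A / 2 * Y"
    and nD2: "nD\<^sup>2 = 9 * x\<^sup>2 - 6 * ip + y\<^sup>2"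
    and dt2: "dt2 = x\<^sup>2 - 2 * ip + y\<^sup>2"
    and K: "K = 3 * L / 2 + s"
  shows "EL + (3/2 * fa - 1/2 * fb) - (3/2 * fb - 1/2 * fm) + K * x\<^sup>2 - K * y\<^sup>2
     \<le> - (2 * s - 3 * L) * x\<^sup>2 - 3/2 * s * dt2 - 1/4 * q"
proof -
  have "nD * (L * y) \<le> (3 * x + y) * (L * y)" using nD L0 y0 by (simp add: mult_right_mono)
  also have "\<dots> = 3 * (L * (x * y)) + L * y\<^sup>2" by (simp add: algebra_simps power2_eq_square)
  finally have m1: "nD * (L * y) \<le> 3 * (L * (x * y)) + L * y\<^sup>2" .
  have m2: "L * (x * y) \<le> L * ((x\<^sup>2 + y\<^sup>2) / 2)"
  proof -
    have "x * y \<le> (x\<^sup>2 + y\<^sup>2) / 2" using sum_squares_bound[of x y] by simp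
    then show ?thesis using L0 by (rule mult_left_mono)
  qed
  have m3: "L * ((x\<^sup>2 + y\<^sup>2) / 2) = 1/2 * (L * x\<^sup>2) + 1/2 * (L * y\<^sup>2)" by (simp add: algebra_simps)
  have cC2: "- C \<le> 3/2 * (L * x\<^sup>2) + 5/2 * (L * y\<^sup>2)" using cC m1 m2 m3 by linarith
  have e1: "s / 2 * nD\<^sup>2 = 9/2 * (s * x\<^sup>2) - 3 * (s * ip) + 1/2 * (s * y\<^sup>2)" unfolding nD2 by (simp add: algebra_simps)
  have e2: "K * x\<^sup>2 = 3/2 * (L * x\<^sup>2) + s * x\<^sup>2" "K * y\<^sup>2 = 3/2 * (L * y\<^sup>2) + s * y\<^sup>2" using K by (simp_all add: algebra_simps)
  have e3: "- (2 * s - 3 * L) * x\<^sup>2 = - 2 * (s * x\<^sup>2) + 3 * (L * x\<^sup>2)" by (simp add: algebra_simps)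
  have e4: "3/2 * s * dt2 = 3/2 * (s * x\<^sup>2) - 3 * (s * ip) + 3/2 * (s * y\<^sup>2)" unfolding dt2 by (simp add: algebra_simps)
  have e5: "\<tau> * A / 2 * Y = (\<tau> * A * Y) / 2" "L/2 * x\<^sup>2 = (L * x\<^sup>2) / 2" "L/2 * y\<^sup>2 = (L * y\<^sup>2) / 2" by simp_all
  have e6: "- 2 * \<tau> * X = - 2 * (\<tau> * X)" by simp
  show ?thesis using EL iD iG d1 d2 cC2 Tb e1 e2 e3 e4 e5 e6 by linarith
qed

lemma norm3_sq:
  fixes u v :: "'a::real_inner"
  shows "(norm (3 *\<^sub>R u - v))\<^sup>2 = 9 * (norm u)\<^sup>2 - 6 * inner u v + (norm v)\<^sup>2"
  by (simp add: power2_norm_eq_inner inner_diff_left inner_diff_right inner_commute algebra_simps)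

lemma norm1_sq:
  fixes u v :: "'a::real_inner"
  shows "(norm (u - v))\<^sup>2 = (norm u)\<^sup>2 - 2 * inner u v + (norm v)\<^sup>2"
  by (simp add: power2_norm_eq_inner inner_diff_left inner_diff_right inner_commute algebra_simps)

lemma bdf2_id:
  fixes T :: "'a::real_inner \<Rightarrow> 'a"
  assumes lin: "linear T" and sy: "\<And>x y. inner (T x) y = inner x (T y)"
  shows "1/4 * sqrt_op_norm_sq T a + 1/4 * sqrt_op_norm_sq T (2 *\<^sub>R a - b)
      - (1/4 * sqrt_op_norm_sq T b + 1/4 * sqrt_op_norm_sq T (2 *\<^sub>R b - m))
      = 1/2 * inner (3 *\<^sub>R a - 4 *\<^sub>R b + m) (T a) - 1/4 * sqrt_op_norm_sq T (a - 2 *\<^sub>R b + m)"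
proof -
  have ls: "inner y (T x) = inner x (T y)" for x y
    using sy[of y x] by (simp add: inner_commute)
  have s1: "inner b (T a) = inner a (T b)" "inner m (T a) = inner a (T m)" "inner m (T b) = inner b (T m)"
    by (rule ls)+
  show ?thesis
    unfolding sqrt_op_norm_sq_def
    by (simp add: linear_diff[OF lin] linear_add[OF lin] linear_scale[OF lin]
        inner_diff_left inner_diff_right inner_add_left inner_add_right s1 algebra_simps)
qed

theorem theorem3p9:
  fixes Lop :: "'a::{real_inner, complete_space} \<Rightarrow> 'a"
    and f :: "'a \<Rightarrow> real" and gradf :: "'a \<Rightarrow> 'a"
    and M S :: "'a \<Rightarrow> 'a \<Rightarrow> 'a"
    and Lc alphaM betaS \<tau> A :: real
    and Pm P0 Phat P1 :: 'a
  assumes Lop: "sym_pos_def_op Lop"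
    and fderiv: "\<And>x. (f has_derivative (\<lambda>h. inner (gradf x) h)) (at x)"
    and lip: "Lc-lipschitz_on UNIV gradf"
    and S_skew: "\<And>\<Phi>. skew_sym_op (S \<Phi>)"
    and M_spd: "\<And>\<Phi>. sym_pos_def_op (\<lambda>x. - M \<Phi> x)"
    and alpha_pos: "alphaM > 0" and beta_pos: "betaS > 0"
    and S_bound: "\<And>\<Phi> \<Psi>1 \<Psi>2. inner (S \<Phi> \<Psi>1) \<Psi>2 \<le> betaS * norm \<Psi>1 * norm \<Psi>2"
    and M_coer: "\<And>\<Phi> \<Psi>. inner (- M \<Phi> \<Psi>) \<Psi> \<ge> alphaM * (norm \<Psi>)\<^sup>2"
    and tau_pos: "\<tau> > 0" and A_pos: "A > 0"
    and scheme: "(1 / (2 * \<tau>)) *\<^sub>R (3 *\<^sub>R P1 - 4 *\<^sub>R P0 + Pm)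
        = M Phat \<mu> + S Phat \<mu>"
    and mu: "\<mu> = Lop P1 - (\<tau> * A) *\<^sub>R M Phat (3 *\<^sub>R P1 - 4 *\<^sub>R P0 + Pm)
        + 2 *\<^sub>R gradf P0 - gradf Pm"
    and A_large: "A \<ge> 9 * Lc\<^sup>2 / 8 * (1 + betaS / alphaM)\<^sup>2"
  shows "let c = inverse (1 + betaS / alphaM); dtt = P1 - 2 *\<^sub>R P0 + Pm in
    E_BDF2 Lop f Lc A c P1 P0 - E_BDF2 Lop f Lc A c P0 Pm
      \<le> - (2 * sqrt (2 * A) * c - 3 * Lc) * (norm (P1 - P0))\<^sup>2
         - 3/2 * sqrt (2 * A) * c * (norm dtt)\<^sup>2
         - 1/4 * sqrt_op_norm_sq Lop dtt"
proof -
  define D where "D = 3 *\<^sub>R P1 - 4 *\<^sub>R P0 + Pm"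
  define c where "c = inverse (1 + betaS / alphaM)"
  define r where "r = sqrt (2 * A)"
  define X where "X = inner (- M Phat \<mu>) \<mu>"
  define Y where "Y = inner (- M Phat D) D"
  define \<epsilon> where "\<epsilon> = 2 / r"
  have r_pos: "r > 0" and r2: "r * r = 2 * A" using A_pos by (auto simp: r_def)
  have eps_pos: "\<epsilon> > 0" using r_pos by (simp add: \<epsilon>_def)
  have L0: "Lc \<ge> 0" using lip by (rule lipschitz_on_nonneg)
  have Plin: "linear (\<lambda>x. - M Phat x)" and Psym: "\<And>x y. inner (- M Phat x) y = inner x (- M Phat y)"
    using M_spd[of Phat] by (auto simp: sym_pos_def_op_def)
  have Madd: "M Phat (u + v) = M Phat u + M Phat v" for u v
    using linear_add[OF Plin, of u v] by (simp add: algebra_simps)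
  have Mscale: "M Phat (t *\<^sub>R u) = t *\<^sub>R M Phat u" for t u
    using linear_scale[OF Plin, of t u] by simp
  have Sskew: "inner (S Phat \<mu>) \<mu> = 0"
  proof -
    have "inner (S Phat \<mu>) \<mu> = - inner \<mu> (S Phat \<mu>)"
      using S_skew[of Phat] unfolding skew_sym_op_def by blast
    then show ?thesis by (simp add: inner_commute)
  qed
  have Dscheme: "D = (2 * \<tau>) *\<^sub>R (M Phat \<mu> + S Phat \<mu>)"
  proof -
    have "(2 * \<tau>) *\<^sub>R ((1 / (2 * \<tau>)) *\<^sub>R D) = D" using tau_pos by simp
    then show ?thesis using scheme by (simp add: D_def)
  qed
  have F1: "inner D \<mu> = - 2 * \<tau> * X"
    unfolding X_def by (subst Dscheme) (simp add: inner_add_left Sskew)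
  have F2: "inner D \<mu> = inner D (Lop P1) + \<tau> * A * Y + inner D (2 *\<^sub>R gradf P0 - gradf Pm)"
    unfolding Y_def by (subst mu) (simp add: D_def[symmetric] inner_add_right inner_diff_right inner_commute)
  have F5: "(norm D)\<^sup>2 = 2 * \<tau> * (inner (M Phat \<mu>) D + inner (S Phat \<mu>) D)"
  proof -
    have "(norm D)\<^sup>2 = inner D D" by (simp add: power2_norm_eq_inner)
    also have "\<dots> = inner ((2 * \<tau>) *\<^sub>R (M Phat \<mu> + S Phat \<mu>)) D" by (subst (1) Dscheme) simp
    finally show ?thesis by (simp add: inner_add_left)
  qed
  have F3: "inner (M Phat \<mu>) D \<le> (\<epsilon> * X + Y / \<epsilon>) / 2"
  proof -
    have nn: "0 \<le> inner (- M Phat (\<epsilon> *\<^sub>R \<mu> + D)) (\<epsilon> *\<^sub>R \<mu> + D)"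
    proof -
      have "0 \<le> alphaM * (norm (\<epsilon> *\<^sub>R \<mu> + D))\<^sup>2" using alpha_pos by simp
      then show ?thesis using M_coer[of "\<epsilon> *\<^sub>R \<mu> + D" Phat] by linarith
    qed
    have e1: "- M Phat (\<epsilon> *\<^sub>R \<mu> + D) = \<epsilon> *\<^sub>R (- M Phat \<mu>) + (- M Phat D)"
      by (simp add: Madd Mscale)
    have sy: "inner (- M Phat D) \<mu> = inner (- M Phat \<mu>) D"
      using Psym[of D \<mu>] by (simp only: inner_commute)
    have "inner (- M Phat (\<epsilon> *\<^sub>R \<mu> + D)) (\<epsilon> *\<^sub>R \<mu> + D)
        = \<epsilon> * (\<epsilon> * X) + \<epsilon> * inner (- M Phat \<mu>) D + \<epsilon> * inner (- M Phat D) \<mu> + Y"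
      unfolding e1 X_def Y_def
      by (simp only: inner_add_left inner_add_right inner_scaleR_left inner_scaleR_right) (simp add: algebra_simps)
    then have q: "0 \<le> \<epsilon> * (\<epsilon> * X) + 2 * (\<epsilon> * inner (- M Phat \<mu>) D) + Y"
      using nn sy by simp
    have "\<epsilon> * (- 2 * inner (- M Phat \<mu>) D) \<le> \<epsilon> * (\<epsilon> * X + Y / \<epsilon>)"
      using q eps_pos by (simp add: distrib_left)
    then have "- 2 * inner (- M Phat \<mu>) D \<le> \<epsilon> * X + Y / \<epsilon>"
      using eps_pos by (simp add: mult_le_cancel_left_pos)
    then show ?thesis by simp
  qed
  have F4: "inner (S Phat \<mu>) D \<le> betaS / alphaM * ((\<epsilon> * X + Y / \<epsilon>) / 2)"
  proof -
    have amgm: "2 * (norm \<mu> * norm D) \<le> \<epsilon> * (norm \<mu>)\<^sup>2 + (norm D)\<^sup>2 / \<epsilon>"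
    proof -
      have "0 \<le> (\<epsilon> * norm \<mu> - norm D)\<^sup>2" by simp
      then have "\<epsilon> * (2 * (norm \<mu> * norm D)) \<le> \<epsilon> * (\<epsilon> * (norm \<mu>)\<^sup>2 + (norm D)\<^sup>2 / \<epsilon>)"
        using eps_pos by (simp add: algebra_simps power2_eq_square)
      then show ?thesis using eps_pos by (simp add: mult_le_cancel_left_pos)
    qed
    have cx: "alphaM * (norm \<mu>)\<^sup>2 \<le> X" and cy: "alphaM * (norm D)\<^sup>2 \<le> Y"
      using M_coer unfolding X_def Y_def by auto
    have "\<epsilon> * (norm \<mu>)\<^sup>2 + (norm D)\<^sup>2 / \<epsilon> \<le> (\<epsilon> * X + Y / \<epsilon>) / alphaM"
    proof -
      have "alphaM * (\<epsilon> * (norm \<mu>)\<^sup>2 + (norm D)\<^sup>2 / \<epsilon>) \<le> \<epsilon> * X + Y / \<epsilon>"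
        using cx cy eps_pos
        by (simp add: algebra_simps mult_left_mono divide_right_mono add_mono)
      then show ?thesis using alpha_pos by (simp add: field_simps)
    qed
    then have h2: "betaS * (2 * (norm \<mu> * norm D)) \<le> betaS * ((\<epsilon> * X + Y / \<epsilon>) / alphaM)"
      using amgm beta_pos by (smt (verit) mult_left_mono)
    have gen: "\<And>Z W. betaS * (2 * Z) \<le> betaS * (W / alphaM) \<Longrightarrow> betaS * Z \<le> betaS / alphaM * (W / 2)"
      by (simp add: field_simps)
    have "betaS * norm \<mu> * norm D \<le> betaS / alphaM * ((\<epsilon> * X + Y / \<epsilon>) / 2)"
      using gen[OF h2] by (simp only: mult.assoc)
    moreover have "inner (S Phat \<mu>) D \<le> betaS * norm \<mu> * norm D" by (rule S_bound)
    ultimately show ?thesis by linarith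
  qed
  have Dbound: "(norm D)\<^sup>2 \<le> \<tau> * ((1 + betaS / alphaM) * (\<epsilon> * X + Y / \<epsilon>))"
  proof -
    define W where "W = \<epsilon> * X + Y / \<epsilon>"
    have "inner (M Phat \<mu>) D + inner (S Phat \<mu>) D \<le> (1 + betaS / alphaM) * (W / 2)"
    proof -
      have "(1 + betaS / alphaM) * (W / 2) = W / 2 + betaS / alphaM * (W / 2)" by (simp add: distrib_right)
      then show ?thesis using F3 F4 unfolding W_def[symmetric] by linarith
    qed
    then have "2 * \<tau> * (inner (M Phat \<mu>) D + inner (S Phat \<mu>) D) \<le> 2 * \<tau> * ((1 + betaS / alphaM) * (W / 2))"
      using tau_pos by (simp add: mult_left_mono)
    then show ?thesis using F5 unfolding W_def[symmetric] by simp
  qed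
  have Tb: "r * c / 2 * (norm D)\<^sup>2 \<le> \<tau> * X + \<tau> * A / 2 * Y"
  proof -
    have c1: "c * (1 + betaS / alphaM) = 1" and c0: "c > 0"
    proof -
      have p: "1 + betaS / alphaM > 0" using alpha_pos beta_pos by (smt (verit) divide_pos_pos)
      show "c * (1 + betaS / alphaM) = 1" unfolding c_def using p by (simp add: left_inverse)
      show "c > 0" unfolding c_def using p by simp
    qed
    have "c * (norm D)\<^sup>2 \<le> c * (\<tau> * ((1 + betaS / alphaM) * (\<epsilon> * X + Y / \<epsilon>)))"
      using Dbound c0 by (simp add: mult_left_mono)
    also have "\<dots> = (c * (1 + betaS / alphaM)) * (\<tau> * (\<epsilon> * X + Y / \<epsilon>))" by (simp only: mult_ac)
    also have "\<dots> = \<tau> * (\<epsilon> * X + Y / \<epsilon>)" using c1 by simp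
    finally have h: "c * (norm D)\<^sup>2 \<le> \<tau> * (\<epsilon> * X + Y / \<epsilon>)" .
    have "r / 2 * (c * (norm D)\<^sup>2) \<le> r / 2 * (\<tau> * (\<epsilon> * X + Y / \<epsilon>))"
      using h r_pos by (simp add: mult_left_mono)
    also have "\<dots> = \<tau> * X + \<tau> * A / 2 * Y"
      using r_pos r2 unfolding \<epsilon>_def by (simp add: field_simps)
    finally show ?thesis by (simp add: algebra_simps)
  qed
  have Llin: "linear Lop" and Lsym: "\<And>x y. inner (Lop x) y = inner x (Lop y)"
    using Lop by (auto simp: sym_pos_def_op_def)
  have ls: "inner y (Lop x) = inner x (Lop y)" for x y
    using Lsym[of y x] by (simp add: inner_commute)
  have ls1: "inner P0 (Lop P1) = inner P1 (Lop P0)" "inner Pm (Lop P1) = inner P1 (Lop Pm)"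
     "inner Pm (Lop P0) = inner P0 (Lop Pm)" by (rule ls)+
  have EL: "1/4 * sqrt_op_norm_sq Lop P1 + 1/4 * sqrt_op_norm_sq Lop (2 *\<^sub>R P1 - P0)
      - (1/4 * sqrt_op_norm_sq Lop P0 + 1/4 * sqrt_op_norm_sq Lop (2 *\<^sub>R P0 - Pm))
      = 1/2 * inner D (Lop P1) - 1/4 * sqrt_op_norm_sq Lop (P1 - 2 *\<^sub>R P0 + Pm)"
    unfolding D_def by (rule bdf2_id[OF Llin Lsym])
  have iD: "inner D (Lop P1) = - 2 * \<tau> * X - \<tau> * A * Y - inner D (2 *\<^sub>R gradf P0 - gradf Pm)"
    using F1 F2 by linarith
  have h4: "(4::real) *\<^sub>R x = 3 *\<^sub>R x + x" for x :: 'a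
    using scaleR_left_distrib[of 3 1 x] by simp
  have h3: "(3::real) *\<^sub>R x = 2 *\<^sub>R x + x" for x :: 'a
    using scaleR_left_distrib[of 2 1 x] by simp
  have Dsplit: "D = 3 *\<^sub>R (P1 - P0) + (Pm - P0)" by (simp add: D_def h4 algebra_simps)
  have iG: "inner D (2 *\<^sub>R gradf P0 - gradf Pm)
      = 3 * inner (gradf P0) (P1 - P0) + inner (gradf P0) (Pm - P0) + inner D (gradf P0 - gradf Pm)"
  proof -
    have "inner D (2 *\<^sub>R gradf P0 - gradf Pm) = inner D (gradf P0) + inner D (gradf P0 - gradf Pm)"
      by (simp add: inner_diff_right algebra_simps)
    moreover have "inner D (gradf P0) = 3 * inner (gradf P0) (P1 - P0) + inner (gradf P0) (Pm - P0)"
      unfolding Dsplit by (simp add: inner_add_left inner_commute inner_add_right)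
    ultimately show ?thesis by simp
  qed
  have d1: "f P1 - f P0 \<le> inner (gradf P0) (P1 - P0) + Lc/2 * (norm (P1 - P0))\<^sup>2"
    by (rule descent[OF fderiv lip])
  have d2: "f Pm - f P0 \<le> inner (gradf P0) (Pm - P0) + Lc/2 * (norm (P0 - Pm))\<^sup>2"
    using descent[OF fderiv lip, of Pm P0] by (simp add: norm_minus_commute)
  have cC: "- inner D (gradf P0 - gradf Pm) \<le> norm D * (Lc * norm (P0 - Pm))"
  proof -
    have "- inner D (gradf P0 - gradf Pm) \<le> norm D * norm (gradf P0 - gradf Pm)"
      using norm_cauchy_schwarz[of D "gradf Pm - gradf P0"] by (simp add: inner_diff_right norm_minus_commute)
    also have "\<dots> \<le> norm D * (Lc * norm (P0 - Pm))"
      using lipschitz_on_normD[OF lip, of P0 Pm] by (simp add: mult_left_mono)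
    finally show ?thesis .
  qed
  have nD: "norm D \<le> 3 * norm (P1 - P0) + norm (P0 - Pm)"
  proof -
    have "D = 3 *\<^sub>R (P1 - P0) - (P0 - Pm)" by (simp add: D_def h4 algebra_simps)
    then have "norm D \<le> norm (3 *\<^sub>R (P1 - P0)) + norm (P0 - Pm)"
      by (metis norm_triangle_ineq4)
    then show ?thesis by simp
  qed
  have nD2: "(norm D)\<^sup>2 = 9 * (norm (P1 - P0))\<^sup>2 - 6 * inner (P1 - P0) (P0 - Pm) + (norm (P0 - Pm))\<^sup>2"
  proof -
    have eq: "D = 3 *\<^sub>R (P1 - P0) - (P0 - Pm)" by (simp add: D_def h4 algebra_simps)
    show ?thesis unfolding eq by (rule norm3_sq)
  qed
  have dt2: "(norm (P1 - 2 *\<^sub>R P0 + Pm))\<^sup>2 = (norm (P1 - P0))\<^sup>2 - 2 * inner (P1 - P0) (P0 - Pm) + (norm (P0 - Pm))\<^sup>2"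
  proof -
    have eq: "P1 - 2 *\<^sub>R P0 + Pm = (P1 - P0) - (P0 - Pm)" by (simp add: algebra_simps scaleR_2)
    show ?thesis unfolding eq by (rule norm1_sq)
  qed
  have Tb': "r * c / 2 * (norm D)\<^sup>2 \<le> \<tau> * X + \<tau> * A / 2 * Y" by (rule Tb)
  have main: "(1/4 * sqrt_op_norm_sq Lop P1 + 1/4 * sqrt_op_norm_sq Lop (2 *\<^sub>R P1 - P0)
      - (1/4 * sqrt_op_norm_sq Lop P0 + 1/4 * sqrt_op_norm_sq Lop (2 *\<^sub>R P0 - Pm)))
      + (3/2 * f P1 - 1/2 * f P0) - (3/2 * f P0 - 1/2 * f Pm)
      + (3 * Lc / 2 + r * c) * (norm (P1 - P0))\<^sup>2 - (3 * Lc / 2 + r * c) * (norm (P0 - Pm))\<^sup>2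
      \<le> - (2 * (r * c) - 3 * Lc) * (norm (P1 - P0))\<^sup>2 - 3/2 * (r * c) * (norm (P1 - 2 *\<^sub>R P0 + Pm))\<^sup>2
        - 1/4 * sqrt_op_norm_sq Lop (P1 - 2 *\<^sub>R P0 + Pm)"
    by (rule final_arith[OF EL iD iG d1 d2 cC nD L0 norm_ge_zero norm_ge_zero Tb nD2 dt2 refl])
  show ?thesis
    using main unfolding Let_def E_BDF2_def r_def c_def[symmetric]
    by (simp only: mult.assoc)
qed

end
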